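(* Let $k\ge 2$ be an integer and let $F$ be a $(k,2,k)$-pattern with $W^k(F)=W^{k-1}(F)=\cdots=W^{k-g(k)}(F)=0$. Then $F$ is homogeneous.
   Context: A $(k,2,k)$-pattern is a $k$-uniform hypergraph $F$ with a partition $V(F)=V_1\cup V_2$, $|V_1|=|V_2|=k$, such that whether $S\in\binom{V(F)}{k}$ is an edge depends only on $(|S\cap V_1|,|S\cap V_2|)$; $F$ is homogeneous if it is empty or complete. For a finite set $V$ with $|V|\ge 2k\ge 2r$ and $f\colon\binom{V}{k}\to\mathbb{R}$, \[ W^r(f)=\left(\mathbb{E}_{(a_1,b_1,\ldots,a_r,b_r)}\Big(\mathbb{E}_{R}\,(-1)^{|R\cap\{b_1,\ldots,b_r\}|}f(R)\Big)^2\right)^{1/2}, \] where $(a_1,b_1,\ldots,a_r,b_r)$ is a uniformly random sequence of $2r$ distinct elements of $V$, and $R$ is a uniformly random $k$-subset of $V$ with $|R\cap\{a_i,b_i\}|=1$ for each $i\in[r]$; $W^r(F)=W^r(\mathbf{1}_F)$ with $\mathbf{1}_F$ the edge indicator. $g(k)$ is the smallest integer $g\ge 0$ such that for each integer $m\in[2,k]$, the system $\sum_{0\le i\le r}(-1)^i\binom{r}{i}\alpha_i=0$ for $r=m-g,\ldots,m$, with $\vec\alpha=(\alpha_0,\ldots,\alpha_m)\in\{0,1\}^{m+1}$, has only the solutions $(0,\ldots,0)$ and $(1,\ldots,1)$. *)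

theory Defs
  imports Complex_Main
begin

definition avg :: "'b set \<Rightarrow> ('b \<Rightarrow> real) \<Rightarrow> real" where
  "avg A h = (\<Sum>x\<in>A. h x) / real (card A)"

text \<open>Sequences (a_1,b_1,...,a_r,b_r) of 2r distinct elements of V, encoded as lists
  with a_i = xs!(2i), b_i = xs!(2i+1) for i < r.\<close>
definition seqs :: "nat \<Rightarrow> 'a set \<Rightarrow> 'a list set" where
  "seqs r V = {xs. length xs = 2 * r \<and> distinct xs \<and> set xs \<subseteq> V}"

definition transversals :: "nat \<Rightarrow> nat \<Rightarrow> 'a set \<Rightarrow> 'a list \<Rightarrow> 'a set set" where
  "transversals r k V xs = {R. R \<subseteq> V \<and> card R = k \<and>
      (\<forall>i<r. card (R \<inter> {xs ! (2*i), xs ! (2*i+1)}) = 1)}"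

definition bset :: "nat \<Rightarrow> 'a list \<Rightarrow> 'a set" where
  "bset r xs = {xs ! (2*i+1) | i. i < r}"

definition W :: "nat \<Rightarrow> nat \<Rightarrow> 'a set \<Rightarrow> ('a set \<Rightarrow> real) \<Rightarrow> real" where
  "W r k V f = sqrt (avg (seqs r V) (\<lambda>xs.
      (avg (transversals r k V xs) (\<lambda>R. (-1) ^ card (R \<inter> bset r xs) * f R)) ^ 2))"

definition kset :: "nat \<Rightarrow> 'a set \<Rightarrow> 'a set set" where
  "kset k V = {S. S \<subseteq> V \<and> card S = k}"

definition is_pattern :: "nat \<Rightarrow> 'a set \<Rightarrow> 'a set \<Rightarrow> 'a set set \<Rightarrow> bool" where
  "is_pattern k V1 V2 E \<longleftrightarrow> finite V1 \<and> finite V2 \<and> V1 \<inter> V2 = {} \<and>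
     card V1 = k \<and> card V2 = k \<and> E \<subseteq> kset k (V1 \<union> V2) \<and>
     (\<forall>S\<in>kset k (V1 \<union> V2). \<forall>T\<in>kset k (V1 \<union> V2).
        card (S \<inter> V1) = card (T \<inter> V1) \<and> card (S \<inter> V2) = card (T \<inter> V2)
        \<longrightarrow> (S \<in> E \<longleftrightarrow> T \<in> E))"

definition homogeneous :: "nat \<Rightarrow> 'a set \<Rightarrow> 'a set set \<Rightarrow> bool" where
  "homogeneous k V E \<longleftrightarrow> E = {} \<or> E = kset k V"

definition indic :: "'a set set \<Rightarrow> 'a set \<Rightarrow> real" where
  "indic E S = (if S \<in> E then 1 else 0)"

text \<open>Entries alpha i for i > m are irrelevant (only r \<le> m occurs).
  For natural r the range m-g..m (truncated subtraction) agrees with the integer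
  range up to negative r, for which the equation is an empty sum and trivially holds.\<close>
definition gk :: "nat \<Rightarrow> nat" where
  "gk k = (LEAST g. \<forall>m\<in>{2..k}. \<forall>\<alpha>::nat \<Rightarrow> bool.
      (\<forall>r\<in>{m-g..m}. (\<Sum>i\<le>r. (-1::int) ^ i * int (r choose i) * (if \<alpha> i then 1 else 0)) = 0)
      \<longrightarrow> ((\<forall>i\<le>m. \<not> \<alpha> i) \<or> (\<forall>i\<le>m. \<alpha> i)))"

end

theory Submission
  imports Defs
begin

definition Dsub :: "(nat \<Rightarrow> real) \<Rightarrow> nat \<Rightarrow> nat \<Rightarrow> real" where
  "Dsub \<beta> r t = (\<Sum>I\<in>Pow {..<r}. (-1)^card I * \<beta> (t + r - card I))"

lemma Dsub_Suc: "Dsub \<beta> (Suc r) t = Dsub \<beta> r (Suc t) - Dsub \<beta> r t"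
proof -
  have P: "Pow {..<Suc r} = Pow {..<r} \<union> insert r ` Pow {..<r}"
    by (simp add: lessThan_Suc Pow_insert)
  have disj: "Pow {..<r} \<inter> insert r ` Pow {..<r} = {}" by auto
  have inj: "inj_on (insert r) (Pow {..<r})"
  proof (rule inj_onI)
    fix x y assume "x \<in> Pow {..<r}" "y \<in> Pow {..<r}" and e: "insert r x = insert r y"
    then have "r \<notin> x" "r \<notin> y" by auto
    then have "x = insert r x - {r}" "y = insert r y - {r}" by auto
    then show "x = y" using e by simp
  qed
  have s1: "(\<Sum>I\<in>Pow {..<r}. (-1)^card I * \<beta> (t + Suc r - card I)) = Dsub \<beta> r (Suc t)"
    unfolding Dsub_def by (rule sum.cong) auto
  have s2: "(\<Sum>I\<in>insert r ` Pow {..<r}. (-1)^card I * \<beta> (t + Suc r - card I)) = - Dsub \<beta> r t"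
  proof -
    have "(\<Sum>I\<in>insert r ` Pow {..<r}. (-1)^card I * \<beta> (t + Suc r - card I))
       = (\<Sum>I\<in>Pow {..<r}. (-1)^card (insert r I) * \<beta> (t + Suc r - card (insert r I)))"
      using sum.reindex[OF inj, of "\<lambda>I. (-1)^card I * \<beta> (t + Suc r - card I)"] by simp
    also have "\<dots> = (\<Sum>I\<in>Pow {..<r}. - ((-1)^card I * \<beta> (t + r - card I)))"
    proof (rule sum.cong[OF refl])
      fix I assume "I \<in> Pow {..<r}"
      then have "finite I" "r \<notin> I" using finite_subset by auto
      then show "(-1)^card (insert r I) * \<beta> (t + Suc r - card (insert r I)) = - ((-1)^card I * \<beta> (t + r - card I))"
        by simp
    qed
    also have "\<dots> = - Dsub \<beta> r t" by (simp add: Dsub_def sum_negf)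
    finally show ?thesis .
  qed
  have "Dsub \<beta> (Suc r) t = (\<Sum>I\<in>Pow {..<r} \<union> insert r ` Pow {..<r}. (-1)^card I * \<beta> (t + Suc r - card I))"
    by (simp only: Dsub_def P)
  also have "\<dots> = (\<Sum>I\<in>Pow {..<r}. (-1)^card I * \<beta> (t + Suc r - card I))
      + (\<Sum>I\<in>insert r ` Pow {..<r}. (-1)^card I * \<beta> (t + Suc r - card I))"
    by (rule sum.union_disjoint) (use disj in auto)
  also have "\<dots> = Dsub \<beta> r (Suc t) - Dsub \<beta> r t" using s1 s2 by simp
  finally show ?thesis .
qed

lemma sum_Pow_card: "(\<Sum>I\<in>Pow {..<r}. h (card I)) = (\<Sum>s\<le>r. real (r choose s) * h s)"
proof -
  have "(\<Sum>I\<in>Pow {..<r}. h (card I)) = (\<Sum>s\<in>{..r}. \<Sum>I\<in>{I. I\<in>Pow {..<r} \<and> card I = s}. h (card I))"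
  proof (rule sum.group[symmetric])
    show "card ` Pow {..<r} \<subseteq> {..r}"
    proof
      fix x assume "x \<in> card ` Pow {..<r}"
      then obtain I where "I \<subseteq> {..<r}" "x = card I" by auto
      then show "x \<in> {..r}" using card_mono[of "{..<r}" I] by simp
    qed
  qed auto
  also have "\<dots> = (\<Sum>s\<le>r. real (r choose s) * h s)"
  proof (rule sum.cong[OF refl])
    fix s assume "s \<in> {..r}"
    have "{I. I\<in>Pow {..<r} \<and> card I = s} = {B. B \<subseteq> {..<r} \<and> card B = s}" by auto
    then have "card {I. I\<in>Pow {..<r} \<and> card I = s} = r choose s"
      using n_subsets[of "{..<r}" s] by simp
    moreover have "(\<Sum>I\<in>{I. I\<in>Pow {..<r} \<and> card I = s}. h (card I))
        = (\<Sum>I\<in>{I. I\<in>Pow {..<r} \<and> card I = s}. h s)" by (rule sum.cong) auto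
    ultimately show "(\<Sum>I\<in>{I. I\<in>Pow {..<r} \<and> card I = s}. h (card I)) = real (r choose s) * h s"
      by simp
  qed
  finally show ?thesis .
qed

lemma Dsub0: "Dsub \<beta> r 0 = (-1)^r * (\<Sum>i\<le>r. (-1)^i * real (r choose i) * \<beta> i)"
proof -
  have "Dsub \<beta> r 0 = (\<Sum>s\<le>r. real (r choose s) * ((-1)^s * \<beta> (r - s)))"
    unfolding Dsub_def using sum_Pow_card[of "\<lambda>s. (-1)^s * \<beta> (r - s)" r] by simp
  also have "\<dots> = (\<Sum>i\<in>{0..r}. real (r choose (r - i)) * ((-1)^(r - i) * \<beta> (r - (r - i))))"
    using sum.atLeastAtMost_rev[of "\<lambda>s. real (r choose s) * ((-1)^s * \<beta> (r - s))" 0 r]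
    by (simp add: atMost_atLeast0)
  also have "\<dots> = (\<Sum>i\<le>r. (-1)^r * ((-1)^i * real (r choose i) * \<beta> i))"
  proof (rule sum.cong)
    fix i assume "i \<in> {..r}"
    then have i: "i \<le> r" by simp
    have c: "r choose (r - i) = r choose i" using binomial_symmetric[OF i] by simp
    have "(-1::real)^r = (-1)^(r-i) * (-1)^i" using i by (simp flip: power_add)
    then have e: "(-1::real)^(r-i) = (-1)^r * (-1)^i"
    proof -
      have sq: "(-1::real)^i * (-1)^i = 1" by (simp flip: power_add)
      have "(-1::real)^r * (-1)^i = (-1)^(r-i) * ((-1)^i * (-1)^i)"
        using \<open>(-1::real)^r = (-1)^(r-i) * (-1)^i\<close> by simp
      then show ?thesis using sq by simp
    qed
    show "real (r choose (r - i)) * ((-1)^(r - i) * \<beta> (r - (r - i))) = (-1)^r * ((-1)^i * real (r choose i) * \<beta> i)"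
      using i c e by simp
  qed (simp add: atMost_atLeast0)
  also have "\<dots> = (-1)^r * (\<Sum>i\<le>r. (-1)^i * real (r choose i) * \<beta> i)"
    by (simp add: sum_distrib_left)
  finally show ?thesis .
qed

lemma gk_prop:
  assumes "k \<ge> 2"
  shows "\<forall>\<alpha>::nat \<Rightarrow> bool.
      (\<forall>r\<in>{k-gk k..k}. (\<Sum>i\<le>r. (-1::int) ^ i * int (r choose i) * (if \<alpha> i then 1 else 0)) = 0)
      \<longrightarrow> ((\<forall>i\<le>k. \<not> \<alpha> i) \<or> (\<forall>i\<le>k. \<alpha> i))"
proof -
  define P where "P = (\<lambda>g. \<forall>m\<in>{2..k}. \<forall>\<alpha>::nat \<Rightarrow> bool.
      (\<forall>r\<in>{m-g..m}. (\<Sum>i\<le>r. (-1::int) ^ i * int (r choose i) * (if \<alpha> i then 1 else 0)) = 0)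
      \<longrightarrow> ((\<forall>i\<le>m. \<not> \<alpha> i) \<or> (\<forall>i\<le>m. \<alpha> i)))"
  have "P k"
    unfolding P_def
  proof (intro ballI allI impI, rule disjI1)
    fix m and \<alpha> :: "nat \<Rightarrow> bool"
    assume m: "m \<in> {2..k}"
      and h: "\<forall>r\<in>{m-k..m}. (\<Sum>i\<le>r. (-1::int) ^ i * int (r choose i) * (if \<alpha> i then 1 else 0)) = 0"
    have h': "\<And>r. r \<le> m \<Longrightarrow> (\<Sum>i\<le>r. (-1::int) ^ i * int (r choose i) * (if \<alpha> i then 1 else 0)) = 0"
      using h m by auto
    have "\<forall>i. i \<le> m \<longrightarrow> \<not> \<alpha> i"
    proof (intro allI)
      fix i show "i \<le> m \<longrightarrow> \<not> \<alpha> i"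
      proof (induction i rule: less_induct)
        case (less i)
        show ?case
        proof
          assume im: "i \<le> m"
          have z: "(\<Sum>j<i. (-1::int) ^ j * int (i choose j) * (if \<alpha> j then 1 else 0)) = 0"
            by (rule sum.neutral) (use less im in auto)
          have "(\<Sum>j\<le>i. (-1::int) ^ j * int (i choose j) * (if \<alpha> j then 1 else 0)) = 0"
            using h' im by simp
          then have "(-1::int) ^ i * (if \<alpha> i then 1 else 0) = 0"
            using z by (simp add: lessThan_Suc_atMost[symmetric])
          then show "\<not> \<alpha> i" by (auto split: if_splits)
        qed
      qed
    qed
    then show "\<forall>i\<le>m. \<not> \<alpha> i" by auto
  qed
  then have "P (LEAST g. P g)" by (rule LeastI[of P k])
  moreover have "gk k = (LEAST g. P g)" unfolding gk_def P_def by simp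
  ultimately have "P (gk k)" by simp
  then show ?thesis unfolding P_def using assms by auto
qed

lemma W_zero_inner:
  assumes W0: "W r k V f = 0" and xs: "xs \<in> seqs r V" and fin: "finite V"
  shows "(\<Sum>R\<in>transversals r k V xs. (-1) ^ card (R \<inter> bset r xs) * f R) = 0"
proof -
  let ?F = "\<lambda>xs. (avg (transversals r k V xs) (\<lambda>R. (-1) ^ card (R \<inter> bset r xs) * f R)) ^ 2"
  have fs: "finite (seqs r V)"
    by (rule finite_subset[OF _ finite_lists_length_eq[OF fin, of "2*r"]]) (auto simp: seqs_def)
  have "avg (seqs r V) ?F = 0" using W0 unfolding W_def by simp
  then have "sum ?F (seqs r V) = 0"
    using fs xs unfolding avg_def by (auto simp: card_eq_0_iff)
  then have "?F xs = 0"
    using sum_nonneg_eq_0_iff[OF fs, of ?F] xs by auto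
  then have a0: "avg (transversals r k V xs) (\<lambda>R. (-1) ^ card (R \<inter> bset r xs) * f R) = 0" by simp
  have ft: "finite (transversals r k V xs)"
    by (rule finite_subset[of _ "Pow V"]) (use fin in \<open>auto simp: transversals_def\<close>)
  show ?thesis
  proof (cases "card (transversals r k V xs) = 0")
    case True
    then have "transversals r k V xs = {}" using ft by simp
    then show ?thesis by simp
  next
    case False
    then show ?thesis using a0 unfolding avg_def by simp
  qed
qed


lemma pair_card: "x \<noteq> y \<Longrightarrow> card (R \<inter> {x, y}) = 1 \<longleftrightarrow> (x \<in> R \<longleftrightarrow> y \<notin> R)"
  by (cases "x \<in> R"; cases "y \<in> R") (auto simp: Int_insert_right)

lemma main_sum:
  fixes as bs :: "'a list" and E :: "'a set set" and \<beta> :: "nat \<Rightarrow> real"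
  assumes das: "distinct as" and dbs: "distinct bs" and las: "length as = k" and lbs: "length bs = k"
    and disj: "set as \<inter> set bs = {}" and rk: "r \<le> k"
    and beta: "\<forall>S\<in>kset k (set as \<union> set bs). indic E S = \<beta> (card (S \<inter> set as))"
    and W0: "W r k (set as \<union> set bs) (indic E) = 0"
  shows "\<exists>(\<C>::'a set set) h. finite \<C> \<and> \<C> \<noteq> {} \<and> (\<forall>C\<in>\<C>. h C \<le> k - r) \<and> (\<Sum>C\<in>\<C>. Dsub \<beta> r (h C)) = 0"
proof -
  define V1 where "V1 = set as"
  define V2 where "V2 = set bs"
  define V where "V = V1 \<union> V2"
  define a where "a = (\<lambda>i. as ! i)"
  define b where "b = (\<lambda>i. bs ! i)"
  define xs where "xs = map (\<lambda>j. if even j then as ! (j div 2) else bs ! (j div 2)) [0..<2*r]"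
  have finV: "finite V" by (simp add: V_def V1_def V2_def)
  have aV: "\<And>i. i < k \<Longrightarrow> a i \<in> V1" by (simp add: a_def V1_def las)
  have bV: "\<And>i. i < k \<Longrightarrow> b i \<in> V2" by (simp add: b_def V2_def lbs)
  have ainj: "\<And>i j. i < k \<Longrightarrow> j < k \<Longrightarrow> a i = a j \<longleftrightarrow> i = j"
    by (simp add: a_def das las nth_eq_iff_index_eq)
  have binj: "\<And>i j. i < k \<Longrightarrow> j < k \<Longrightarrow> b i = b j \<longleftrightarrow> i = j"
    by (simp add: b_def dbs lbs nth_eq_iff_index_eq)
  have V12: "V1 \<inter> V2 = {}" using disj by (simp add: V1_def V2_def)
  have ab: "\<And>i j. i < k \<Longrightarrow> j < k \<Longrightarrow> a i \<noteq> b j"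
  proof -
    fix i j assume "i < k" "j < k"
    then have "a i \<in> V1" "b j \<in> V2" using aV bV by auto
    then show "a i \<noteq> b j" using V12 by (metis IntI empty_iff)
  qed
  have xs2: "\<And>i. i < r \<Longrightarrow> xs ! (2*i) = a i \<and> xs ! (2*i+1) = b i"
  proof -
    fix i assume "i < r"
    then have "2*i < 2*r" "2*i+1 < 2*r" by auto
    then show "xs ! (2*i) = a i \<and> xs ! (2*i+1) = b i"
      by (simp add: xs_def a_def b_def del: upt.simps)
  qed
  have xs_seq: "xs \<in> seqs r V"
  proof -
    have "length xs = 2 * r" by (simp add: xs_def)
    moreover have "set xs \<subseteq> V"
    proof
      fix x assume "x \<in> set xs"
      then obtain j where j: "j < 2*r" "x = (if even j then as ! (j div 2) else bs ! (j div 2))"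
        by (auto simp: xs_def)
      then have "j div 2 < k" using rk by linarith
      then show "x \<in> V" using j aV bV by (auto simp: V_def a_def b_def)
    qed
    moreover have "distinct xs"
      unfolding xs_def distinct_map
    proof
      show "inj_on (\<lambda>j. if even j then as ! (j div 2) else bs ! (j div 2)) (set [0..<2 * r])"
      proof (rule inj_onI)
        fix i j assume i: "i \<in> set [0..<2 * r]" and j: "j \<in> set [0..<2 * r]"
          and e: "(if even i then as ! (i div 2) else bs ! (i div 2)) = (if even j then as ! (j div 2) else bs ! (j div 2))"
        have ik: "i div 2 < k" "j div 2 < k" using i j rk by auto
        show "i = j"
        proof (cases "even i"; cases "even j")
          assume "even i" "even j"
          then have "a (i div 2) = a (j div 2)" using e by (simp add: a_def)
          then have "i div 2 = j div 2" using ainj ik by blast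
          then show ?thesis using \<open>even i\<close> \<open>even j\<close> by (metis dvd_mult_div_cancel)
        next
          assume "odd i" "odd j"
          then have "b (i div 2) = b (j div 2)" using e by (simp add: b_def)
          then have "i div 2 = j div 2" using binj ik by blast
          then show ?thesis using \<open>odd i\<close> \<open>odd j\<close> by (metis odd_two_times_div_two_succ)
        next
          assume "even i" "odd j"
          then have "a (i div 2) = b (j div 2)" using e by (simp add: a_def b_def)
          then show ?thesis using ab ik by blast
        next
          assume "odd i" "even j"
          then have "a (j div 2) = b (i div 2)" using e by (simp add: a_def b_def)
          then show ?thesis using ab ik by blast
        qed
      qed
    qed simp
    ultimately show ?thesis by (simp add: seqs_def)
  qed
  define T where "T = transversals r k V xs"
  have T_eq: "T = {R. R \<subseteq> V \<and> card R = k \<and> (\<forall>i<r. card (R \<inter> {a i, b i}) = 1)}"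
    unfolding T_def transversals_def using xs2 by auto
  have bset_eq: "bset r xs = b ` {..<r}"
  proof (rule set_eqI)
    fix x show "x \<in> bset r xs \<longleftrightarrow> x \<in> b ` {..<r}"
    proof
      assume "x \<in> bset r xs"
      then obtain i where i: "i < r" "x = xs ! (2*i+1)" by (auto simp: bset_def)
      then show "x \<in> b ` {..<r}" using xs2 by auto
    next
      assume "x \<in> b ` {..<r}"
      then obtain i where i: "i < r" "x = b i" by auto
      then have "x = xs ! (2*i+1)" using xs2 by simp
      then show "x \<in> bset r xs" using i unfolding bset_def by blast
    qed
  qed
  define L1 where "L1 = V1 - a ` {..<r}"
  define L2 where "L2 = V2 - b ` {..<r}"
  define L where "L = L1 \<union> L2"
  have finL: "finite L" by (simp add: L_def L1_def L2_def V1_def V2_def)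
  have LV: "L \<subseteq> V" by (auto simp: L_def L1_def L2_def V_def)
  have aL: "\<And>i. i < r \<Longrightarrow> a i \<notin> L"
  proof -
    fix i assume i: "i < r"
    then have "a i \<in> a ` {..<r}" by simp
    moreover have "a i \<in> V1" using aV i rk by simp
    ultimately show "a i \<notin> L" using V12 unfolding L_def L1_def L2_def by auto
  qed
  have bL: "\<And>i. i < r \<Longrightarrow> b i \<notin> L"
  proof -
    fix i assume i: "i < r"
    then have "b i \<in> b ` {..<r}" by simp
    moreover have "b i \<in> V2" using bV i rk by simp
    ultimately show "b i \<notin> L" using V12 unfolding L_def L1_def L2_def by auto
  qed
  have injar: "inj_on a {..<r}" using ainj rk by (auto simp: inj_on_def)
  have injbr: "inj_on b {..<r}" using binj rk by (auto simp: inj_on_def)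
  have cV1: "card V1 = k" using das las by (simp add: V1_def distinct_card)
  have cL1: "card L1 = k - r"
  proof -
    have "a ` {..<r} \<subseteq> V1" using aV rk by auto
    then show ?thesis unfolding L1_def using card_Diff_subset[of "a ` {..<r}" V1] card_image[OF injar] cV1
      by simp
  qed
  have L1sub: "L1 \<subseteq> L" by (simp add: L_def)
  define \<phi> where "\<phi> = (\<lambda>(C, I). a ` ({..<r} - I) \<union> b ` I \<union> C)"
  define \<psi> where "\<psi> = (\<lambda>R. (R \<inter> L, {i. i < r \<and> b i \<in> R}))"
  define D0 where "D0 = kset (k - r) L \<times> Pow {..<r}"
  have memA: "\<And>C I i. i < r \<Longrightarrow> I \<subseteq> {..<r} \<Longrightarrow> C \<subseteq> L \<Longrightarrow> a i \<in> \<phi> (C, I) \<longleftrightarrow> i \<notin> I"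
  proof -
    fix C I i assume i: "i < r" and I: "I \<subseteq> {..<r}" and C: "C \<subseteq> L"
    have "a i \<notin> b ` I" using ab I i rk by fastforce
    moreover have "a i \<notin> C" using aL i C by blast
    moreover have "a i \<in> a ` ({..<r} - I) \<longleftrightarrow> i \<notin> I"
      using ainj i rk by (auto)
    ultimately show "a i \<in> \<phi> (C, I) \<longleftrightarrow> i \<notin> I" by (auto simp: \<phi>_def)
  qed
  have memB: "\<And>C I i. i < r \<Longrightarrow> I \<subseteq> {..<r} \<Longrightarrow> C \<subseteq> L \<Longrightarrow> b i \<in> \<phi> (C, I) \<longleftrightarrow> i \<in> I"
  proof -
    fix C I i assume i: "i < r" and I: "I \<subseteq> {..<r}" and C: "C \<subseteq> L"
    have "b i \<notin> a ` ({..<r} - I)"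
    proof
      assume "b i \<in> a ` ({..<r} - I)"
      then obtain j where "j < r" "b i = a j" by auto
      then show False using ab[of j i] i rk by simp
    qed
    moreover have "b i \<notin> C" using bL i C by blast
    moreover have "b i \<in> b ` I \<longleftrightarrow> i \<in> I"
      using binj i rk I by (auto)
    ultimately show "b i \<in> \<phi> (C, I) \<longleftrightarrow> i \<in> I" by (auto simp: \<phi>_def)
  qed
  have cardphi: "\<And>C I. I \<subseteq> {..<r} \<Longrightarrow> C \<subseteq> L \<Longrightarrow> card (\<phi> (C, I)) = r + card C"
  proof -
    fix C I assume I: "I \<subseteq> {..<r}" and C: "C \<subseteq> L"
    have fI: "finite I" using I finite_subset by blast
    have fC: "finite C" using C finL finite_subset by blast
    have c1: "card (a ` ({..<r} - I)) = r - card I"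
      using card_image[OF inj_on_subset[OF injar, of "{..<r} - I"]] card_Diff_subset[OF fI I] by simp
    have c2: "card (b ` I) = card I" using card_image[OF inj_on_subset[OF injbr I]] .
    have d1: "a ` ({..<r} - I) \<inter> b ` I = {}" using ab rk I by fastforce
    have d2: "(a ` ({..<r} - I) \<union> b ` I) \<inter> C = {}" using aL bL C I by fastforce
    have cI: "card I \<le> r" using card_mono[OF _ I] by simp
    have "card (\<phi> (C, I)) = card (a ` ({..<r} - I) \<union> b ` I) + card C"
      unfolding \<phi>_def by (simp add: card_Un_disjoint[OF _ fC d2] fI)
    also have "\<dots> = (r - card I) + card I + card C"
      using card_Un_disjoint[OF _ _ d1] fI c1 c2 by simp
    finally show "card (\<phi> (C, I)) = r + card C" using cI by simp
  qed
  have bij: "bij_betw \<phi> D0 T"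
  proof (rule bij_betw_byWitness[where f' = \<psi>])
    show "\<forall>x\<in>D0. \<psi> (\<phi> x) = x"
    proof
      fix x assume "x \<in> D0"
      then obtain C I where x: "x = (C, I)" and C: "C \<subseteq> L" and I: "I \<subseteq> {..<r}"
        by (auto simp: D0_def kset_def)
      have "\<phi> (C, I) \<inter> L = C"
      proof -
        have "a ` ({..<r} - I) \<inter> L = {}" using aL by blast
        moreover have "b ` I \<inter> L = {}" using bL I by blast
        ultimately show ?thesis using C by (auto simp: \<phi>_def)
      qed
      moreover have "{i. i < r \<and> b i \<in> \<phi> (C, I)} = I" using memB[OF _ I C] I by auto
      ultimately show "\<psi> (\<phi> x) = x" by (simp add: \<psi>_def x)
    qed
    have phipsi: "\<And>R. R \<in> T \<Longrightarrow> \<phi> (\<psi> R) = R"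
    proof -
      fix R assume "R \<in> T"
      then have RV: "R \<subseteq> V" and c: "\<forall>i<r. card (R \<inter> {a i, b i}) = 1"
        by (simp_all add: T_eq)
      have Rp: "\<And>i. i < r \<Longrightarrow> (a i \<in> R \<longleftrightarrow> b i \<notin> R)"
      proof -
        fix i assume i: "i < r"
        then have ne: "a i \<noteq> b i" using ab rk by simp
        show "a i \<in> R \<longleftrightarrow> b i \<notin> R" using pair_card[OF ne, of R] c i by simp
      qed
      define I where "I = {i. i < r \<and> b i \<in> R}"
      have VL: "V \<subseteq> L \<union> a ` {..<r} \<union> b ` {..<r}" by (auto simp: V_def L_def L1_def L2_def)
      have "a ` ({..<r} - I) \<union> b ` I \<union> R \<inter> L = R"
      proof
        show "a ` ({..<r} - I) \<union> b ` I \<union> R \<inter> L \<subseteq> R" using Rp by (auto simp: I_def)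
        show "R \<subseteq> a ` ({..<r} - I) \<union> b ` I \<union> R \<inter> L"
        proof
          fix x assume xR: "x \<in> R"
          then have "x \<in> L \<or> x \<in> a ` {..<r} \<or> x \<in> b ` {..<r}" using RV VL by blast
          then show "x \<in> a ` ({..<r} - I) \<union> b ` I \<union> R \<inter> L"
            using xR Rp by (auto simp: I_def)
        qed
      qed
      then show "\<phi> (\<psi> R) = R" by (simp add: \<phi>_def \<psi>_def I_def)
    qed
    then show "\<forall>R\<in>T. \<phi> (\<psi> R) = R" by blast
    show "\<phi> ` D0 \<subseteq> T"
    proof
      fix y assume "y \<in> \<phi> ` D0"
      then obtain C I where y: "y = \<phi> (C, I)" and C: "C \<subseteq> L" and cC: "card C = k - r" and I: "I \<subseteq> {..<r}"
        by (auto simp: D0_def kset_def)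
      have "y \<subseteq> V" using aV bV rk C LV I unfolding y \<phi>_def V_def by fastforce
      moreover have "card y = k" using cardphi[OF I C] cC rk y by simp
      moreover have "\<forall>i<r. card (y \<inter> {a i, b i}) = 1"
        using memA[OF _ I C] memB[OF _ I C] pair_card ab rk y by (metis less_le_trans)
      ultimately show "y \<in> T" by (simp add: T_eq)
    qed
    show "\<psi> ` T \<subseteq> D0"
    proof
      fix y assume "y \<in> \<psi> ` T"
      then obtain R where R: "R \<in> T" and y: "y = \<psi> R" by auto
      have I: "{i. i < r \<and> b i \<in> R} \<subseteq> {..<r}" by auto
      have "card R = r + card (R \<inter> L)"
        using cardphi[OF I, of "R \<inter> L"] phipsi[OF R] by (simp add: \<psi>_def)
      moreover have "card R = k" using R by (simp add: T_eq)
      ultimately have "card (R \<inter> L) = k - r" by simp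
      then show "y \<in> D0" by (auto simp: y \<psi>_def D0_def kset_def)
    qed
  qed
  have summand: "\<And>C I. (C, I) \<in> D0 \<Longrightarrow>
      (-1) ^ card (\<phi> (C, I) \<inter> bset r xs) * indic E (\<phi> (C, I)) = (-1) ^ card I * \<beta> (card (C \<inter> L1) + r - card I)"
  proof -
    fix C I assume CI: "(C, I) \<in> D0"
    then have C: "C \<subseteq> L" and I: "I \<subseteq> {..<r}" by (auto simp: D0_def kset_def)
    have fC: "finite C" using C finL finite_subset by blast
    have fI: "finite I" using I finite_subset by blast
    have cI: "card I \<le> r" using card_mono[OF _ I] by simp
    have "\<phi> (C, I) \<inter> bset r xs = b ` I"
    proof -
      have "a ` ({..<r} - I) \<inter> b ` {..<r} = {}"
      proof (rule ccontr)
        assume "a ` ({..<r} - I) \<inter> b ` {..<r} \<noteq> {}"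
        then obtain i j where "i < r" "j < r" "a i = b j" by auto
        then show False using ab[of i j] rk by simp
      qed
      moreover have "C \<inter> b ` {..<r} = {}" using bL C by blast
      ultimately show ?thesis using I by (auto simp: \<phi>_def bset_eq)
    qed
    then have c1: "card (\<phi> (C, I) \<inter> bset r xs) = card I"
      using card_image[OF inj_on_subset[OF injbr I]] by simp
    have "\<phi> (C, I) \<in> T" using bij CI by (auto simp: bij_betw_def)
    then have "\<phi> (C, I) \<in> kset k V" by (simp add: T_eq kset_def)
    then have c2: "indic E (\<phi> (C, I)) = \<beta> (card (\<phi> (C, I) \<inter> V1))"
      using beta by (simp add: V_def V1_def V2_def)
    have e: "\<phi> (C, I) \<inter> V1 = a ` ({..<r} - I) \<union> (C \<inter> L1)"
    proof -
      have "b ` I \<inter> V1 = {}"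
      proof (rule ccontr)
        assume "b ` I \<inter> V1 \<noteq> {}"
        then obtain i where "i \<in> I" "b i \<in> V1" by auto
        moreover then have "b i \<in> V2" using bV I rk by auto
        ultimately show False using V12 by auto
      qed
      moreover have "a ` ({..<r} - I) \<subseteq> V1" using aV rk by auto
      moreover have "C \<inter> V1 = C \<inter> L1" using C V12 by (auto simp: L_def L1_def L2_def)
      ultimately show ?thesis by (auto simp: \<phi>_def)
    qed
    have d: "a ` ({..<r} - I) \<inter> (C \<inter> L1) = {}" by (auto simp: L1_def)
    have "card (\<phi> (C, I) \<inter> V1) = (r - card I) + card (C \<inter> L1)"
      unfolding e using card_Un_disjoint[OF _ _ d] fC
        card_image[OF inj_on_subset[OF injar, of "{..<r} - I"]] card_Diff_subset[OF fI I] by simp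
    then have "card (\<phi> (C, I) \<inter> V1) = card (C \<inter> L1) + r - card I" using cI by simp
    then show "(-1) ^ card (\<phi> (C, I) \<inter> bset r xs) * indic E (\<phi> (C, I)) = (-1) ^ card I * \<beta> (card (C \<inter> L1) + r - card I)"
      using c1 c2 by simp
  qed
  have "0 = (\<Sum>R\<in>T. (-1) ^ card (R \<inter> bset r xs) * indic E R)"
    using W_zero_inner[OF _ xs_seq finV] W0 by (simp add: T_def V_def V1_def V2_def)
  also have "\<dots> = (\<Sum>x\<in>D0. (-1) ^ card (\<phi> x \<inter> bset r xs) * indic E (\<phi> x))"
    using sum.reindex_bij_betw[OF bij, of "\<lambda>R. (-1) ^ card (R \<inter> bset r xs) * indic E R"] by simp
  also have "\<dots> = (\<Sum>(C, I)\<in>D0. (-1) ^ card I * \<beta> (card (C \<inter> L1) + r - card I))"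
    by (rule sum.cong[OF refl]) (use summand in auto)
  also have "\<dots> = (\<Sum>C\<in>kset (k - r) L. Dsub \<beta> r (card (C \<inter> L1)))"
    unfolding D0_def Dsub_def by (simp add: sum.cartesian_product)
  finally have s0: "(\<Sum>C\<in>kset (k - r) L. Dsub \<beta> r (card (C \<inter> L1))) = 0" by simp
  have fK: "finite (kset (k - r) L)"
    by (rule finite_subset[of _ "Pow L"]) (use finL in \<open>auto simp: kset_def\<close>)
  have nK: "kset (k - r) L \<noteq> {}" using L1sub cL1 by (auto simp: kset_def)
  have hK: "\<forall>C\<in>kset (k - r) L. card (C \<inter> L1) \<le> k - r"
  proof
    fix C assume "C \<in> kset (k - r) L"
    then have "C \<subseteq> L" "card C = k - r" by (auto simp: kset_def)
    then show "card (C \<inter> L1) \<le> k - r"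
      using card_mono[OF finite_subset[OF \<open>C \<subseteq> L\<close> finL], of "C \<inter> L1"] by auto
  qed
  show ?thesis
  proof (intro exI[where x="kset (k - r) L"] exI[where x="\<lambda>C. card (C \<inter> L1)"] conjI)
    show "finite (kset (k - r) L)" by (fact fK)
    show "kset (k - r) L \<noteq> {}" by (fact nK)
    show "\<forall>C\<in>kset (k - r) L. card (C \<inter> L1) \<le> k - r" by (fact hK)
    show "(\<Sum>C\<in>kset (k - r) L. Dsub \<beta> r (card (C \<inter> L1))) = 0" by (fact s0)
  qed
qed


lemma const_avg_zero:
  fixes D :: "nat \<Rightarrow> real" and h :: "'b \<Rightarrow> nat"
  assumes "finite \<C>" "\<C> \<noteq> {}" "\<forall>C\<in>\<C>. h C \<le> n" "\<forall>t\<le>n. D t = D 0"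
    and "(\<Sum>C\<in>\<C>. D (h C)) = 0"
  shows "D 0 = 0"
proof -
  have "(\<Sum>C\<in>\<C>. D (h C)) = (\<Sum>C\<in>\<C>. D 0)"
  proof (rule sum.cong[OF refl])
    fix C assume "C \<in> \<C>"
    then have "h C \<le> n" using assms(3) by blast
    then show "D (h C) = D 0" using assms(4) by blast
  qed
  then have "real (card \<C>) * D 0 = 0" using assms(5) by simp
  moreover have "card \<C> \<noteq> 0" using assms(1,2) by simp
  ultimately show ?thesis by simp
qed

theorem lemma4p4:
  fixes k :: nat and V1 V2 :: "'a set" and E :: "'a set set"
  assumes "k \<ge> 2"
    and "is_pattern k V1 V2 E"
    and "\<forall>r. k - gk k \<le> r \<and> r \<le> k \<longrightarrow> W r k (V1 \<union> V2) (indic E) = 0"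
  shows "homogeneous k (V1 \<union> V2) E"
proof -
  have fin1: "finite V1" and fin2: "finite V2" and disj: "V1 \<inter> V2 = {}"
    and c1: "card V1 = k" and c2: "card V2 = k" and Esub: "E \<subseteq> kset k (V1 \<union> V2)"
    and pat: "\<forall>S\<in>kset k (V1 \<union> V2). \<forall>T\<in>kset k (V1 \<union> V2).
        card (S \<inter> V1) = card (T \<inter> V1) \<and> card (S \<inter> V2) = card (T \<inter> V2)
        \<longrightarrow> (S \<in> E \<longleftrightarrow> T \<in> E)"
  proof -
    note P = assms(2)[unfolded is_pattern_def]
    show "finite V1" by (rule P[THEN conjunct1])
    show "finite V2" by (rule P[THEN conjunct2, THEN conjunct1])
    show "V1 \<inter> V2 = {}" by (rule P[THEN conjunct2, THEN conjunct2, THEN conjunct1])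
    show "card V1 = k" by (rule P[THEN conjunct2, THEN conjunct2, THEN conjunct2, THEN conjunct1])
    show "card V2 = k" by (rule P[THEN conjunct2, THEN conjunct2, THEN conjunct2, THEN conjunct2, THEN conjunct1])
    show "E \<subseteq> kset k (V1 \<union> V2)" by (rule P[THEN conjunct2, THEN conjunct2, THEN conjunct2, THEN conjunct2, THEN conjunct2, THEN conjunct1])
    show "\<forall>S\<in>kset k (V1 \<union> V2). \<forall>T\<in>kset k (V1 \<union> V2).
        card (S \<inter> V1) = card (T \<inter> V1) \<and> card (S \<inter> V2) = card (T \<inter> V2)
        \<longrightarrow> (S \<in> E \<longleftrightarrow> T \<in> E)" by (rule P[THEN conjunct2, THEN conjunct2, THEN conjunct2, THEN conjunct2, THEN conjunct2, THEN conjunct2])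
  qed
  obtain as where as: "set as = V1" "distinct as" using finite_distinct_list[OF fin1] by blast
  obtain bs where bs: "set bs = V2" "distinct bs" using finite_distinct_list[OF fin2] by blast
  have las: "length as = k" using as c1 distinct_card by fastforce
  have lbs: "length bs = k" using bs c2 distinct_card by fastforce
  define \<alpha> where "\<alpha> i = (\<exists>S\<in>E. card (S \<inter> V1) = i)" for i
  define \<beta> where "\<beta> i = (if \<alpha> i then 1 else 0::real)" for i
  have Ecard: "card (S \<inter> V2) = k - card (S \<inter> V1)" if "S \<in> kset k (V1 \<union> V2)" for S
  proof -
    have S: "S \<subseteq> V1 \<union> V2" "card S = k" using that by (auto simp: kset_def)
    have "S = (S \<inter> V1) \<union> (S \<inter> V2)" using S by auto
    moreover have "(S \<inter> V1) \<inter> (S \<inter> V2) = {}" using disj by auto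
    ultimately have "card S = card (S \<inter> V1) + card (S \<inter> V2)"
      using fin1 fin2 card_Un_disjoint[of "S \<inter> V1" "S \<inter> V2"] by simp
    then show ?thesis using S by simp
  qed
  have memE: "S \<in> E \<longleftrightarrow> \<alpha> (card (S \<inter> V1))" if S: "S \<in> kset k (V1 \<union> V2)" for S
  proof
    assume "S \<in> E" then show "\<alpha> (card (S \<inter> V1))" by (auto simp: \<alpha>_def)
  next
    assume "\<alpha> (card (S \<inter> V1))"
    then obtain T where T: "T \<in> E" "card (T \<inter> V1) = card (S \<inter> V1)" by (auto simp: \<alpha>_def)
    have TK: "T \<in> kset k (V1 \<union> V2)" using T Esub by auto
    have "card (T \<inter> V2) = card (S \<inter> V2)" using Ecard[OF TK] Ecard[OF S] T by simp
    have "card (S \<inter> V1) = card (T \<inter> V1) \<and> card (S \<inter> V2) = card (T \<inter> V2)"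
      using T \<open>card (T \<inter> V2) = card (S \<inter> V2)\<close> by simp
    then have "S \<in> E \<longleftrightarrow> T \<in> E" using pat S TK by blast
    then show "S \<in> E" using T by simp
  qed
  have beta: "\<forall>S\<in>kset k (set as \<union> set bs). indic E S = \<beta> (card (S \<inter> set as))"
  proof
    fix S assume "S \<in> kset k (set as \<union> set bs)"
    then have S: "S \<in> kset k (V1 \<union> V2)" by (simp add: as bs)
    show "indic E S = \<beta> (card (S \<inter> set as))"
      using memE[OF S] by (simp add: indic_def \<beta>_def as)
  qed
  define g where "g = gk k"
  have W0: "\<And>r. k - g \<le> r \<Longrightarrow> r \<le> k \<Longrightarrow> W r k (set as \<union> set bs) (indic E) = 0"
    using assms(3) by (simp add: as bs g_def)
  have disj': "set as \<inter> set bs = {}" using as bs disj by simp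
  have key: "j \<le> g \<longrightarrow> j \<le> k \<longrightarrow> (\<forall>t\<le>j. Dsub \<beta> (k - j) t = 0)" for j
  proof (induction j)
    case 0
    show ?case
    proof (intro impI allI)
      fix t :: nat assume "t \<le> 0"
      then have t: "t = 0" by simp
      obtain \<C> :: "'a set set" and h where H: "finite \<C>" "\<C> \<noteq> {}" "\<forall>C\<in>\<C>. h C \<le> k - k"
          "(\<Sum>C\<in>\<C>. Dsub \<beta> k (h C)) = 0"
        using main_sum[OF as(2) bs(2) las lbs disj' order.refl beta W0[OF diff_le_self order.refl]] by blast
      have "Dsub \<beta> k 0 = 0"
        by (rule const_avg_zero[OF H(1,2,3)]) (use H(4) in simp_all)
      then show "Dsub \<beta> (k - 0) t = 0" using t by simp
    qed
  next
    case (Suc j)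
    show ?case
    proof (intro impI)
      assume jg: "Suc j \<le> g" and jk: "Suc j \<le> k"
      define r where "r = k - Suc j"
      have rS: "Suc r = k - j" using jk by (simp add: r_def)
      have IH: "\<forall>t\<le>j. Dsub \<beta> (Suc r) t = 0" using Suc jg jk rS by simp
      have step: "\<forall>t\<le>j. Dsub \<beta> r (Suc t) = Dsub \<beta> r t"
        using IH Dsub_Suc[of \<beta> r] by simp
      have const: "\<forall>t\<le>Suc j. Dsub \<beta> r t = Dsub \<beta> r 0"
      proof (intro allI impI)
        fix t show "t \<le> Suc j \<Longrightarrow> Dsub \<beta> r t = Dsub \<beta> r 0"
        proof (induction t)
          case 0 then show ?case by simp
        next
          case (Suc t) then show ?case using step by simp
        qed
      qed
      have rk: "r \<le> k" by (simp add: r_def)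
      have kr: "k - r = Suc j" using jk by (simp add: r_def)
      have kg: "k - g \<le> r" using jg jk by (simp add: r_def)
      obtain \<C> :: "'a set set" and h where H: "finite \<C>" "\<C> \<noteq> {}" "\<forall>C\<in>\<C>. h C \<le> k - r"
          "(\<Sum>C\<in>\<C>. Dsub \<beta> r (h C)) = 0"
        using main_sum[OF as(2) bs(2) las lbs disj' rk beta W0[OF kg rk]] by blast
      have z: "Dsub \<beta> r 0 = 0"
      proof (rule const_avg_zero[OF H(1,2,3)])
        show "\<forall>t\<le>k - r. Dsub \<beta> r t = Dsub \<beta> r 0" unfolding kr by (rule const)
        show "(\<Sum>C\<in>\<C>. Dsub \<beta> r (h C)) = 0" by (rule H(4))
      qed
      show "\<forall>t\<le>Suc j. Dsub \<beta> (k - Suc j) t = 0"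
      proof (intro allI impI)
        fix t assume "t \<le> Suc j"
        then have "Dsub \<beta> r t = Dsub \<beta> r 0" using const by blast
        then show "Dsub \<beta> (k - Suc j) t = 0" using z unfolding r_def by simp
      qed
    qed
  qed
  have sys: "\<forall>r\<in>{k - gk k..k}. (\<Sum>i\<le>r. (-1::int) ^ i * int (r choose i) * (if \<alpha> i then 1 else 0)) = 0"
  proof
    fix r assume r: "r \<in> {k - gk k..k}"
    then have kr1: "k - r \<le> g" and kr2: "k - r \<le> k" by (auto simp: g_def)
    have "Dsub \<beta> (k - (k - r)) 0 = 0" by (rule key[of "k - r", rule_format, OF kr1 kr2 le0])
    then have "Dsub \<beta> r 0 = 0" using r by simp
    then have rs: "(\<Sum>i\<le>r. (-1)^i * real (r choose i) * \<beta> i) = 0" by (simp add: Dsub0)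
    have "real_of_int (\<Sum>i\<le>r. (-1::int) ^ i * int (r choose i) * (if \<alpha> i then 1 else 0))
        = (\<Sum>i\<le>r. (-1)^i * real (r choose i) * \<beta> i)"
      by (simp add: \<beta>_def if_distrib cong: if_cong)
    then show "(\<Sum>i\<le>r. (-1::int) ^ i * int (r choose i) * (if \<alpha> i then 1 else 0)) = 0"
      using rs by linarith
  qed
  have "(\<forall>i\<le>k. \<not> \<alpha> i) \<or> (\<forall>i\<le>k. \<alpha> i)" using gk_prop[OF assms(1)] sys by blast
  then show ?thesis
  proof
    assume A: "\<forall>i\<le>k. \<not> \<alpha> i"
    have "E = {}"
    proof (rule ccontr)
      assume "E \<noteq> {}"
      then obtain S where S: "S \<in> E" by auto
      then have "S \<in> kset k (V1 \<union> V2)" using Esub by auto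
      then have "card (S \<inter> V1) \<le> k" using c1 fin1 card_mono[of V1 "S \<inter> V1"] by auto
      moreover have "\<alpha> (card (S \<inter> V1))" using S by (auto simp: \<alpha>_def)
      ultimately show False using A by auto
    qed
    then show ?thesis by (simp add: homogeneous_def)
  next
    assume A: "\<forall>i\<le>k. \<alpha> i"
    have "E = kset k (V1 \<union> V2)"
    proof
      show "E \<subseteq> kset k (V1 \<union> V2)" by (fact Esub)
      show "kset k (V1 \<union> V2) \<subseteq> E"
      proof
        fix S assume S: "S \<in> kset k (V1 \<union> V2)"
        have "card (S \<inter> V1) \<le> k" using c1 fin1 card_mono[of V1 "S \<inter> V1"] by auto
        then show "S \<in> E" using memE[OF S] A by auto
      qed
    qed
    then show ?thesis by (simp add: homogeneous_def)
  qed
qed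

end
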